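(* Let $\mathscr X\in\mathbb R^{I_1\times\cdots\times I_N}$ be a nonzero tensor, and set $R_n=\operatorname{rank}(\mathbf X_{(n)})$ for $1\leq n\leq N$. Then $\mathscr X$ has a subtensor $\mathscr Y\in\mathbb R^{R_1\times\cdots\times R_N}$ with $\operatorname{rank}(\mathbf Y_{(n)})=R_n$ for all $1\leq n\leq N$.
   Context: All tensors are real. For $\mathscr X\in\mathbb R^{I_1\times\cdots\times I_N}$, the mode-$n$ unfolding $\mathbf X_{(n)}$ is the $I_n\times\prod_{k\neq n}I_k$ matrix whose rows are indexed by $i_n$ and whose columns are exactly the vectors obtained from $\mathscr X$ by fixing all indices other than $i_n$. A subtensor of $\mathscr X$ is a tensor $\mathscr Y\in\mathbb R^{J_1\times\cdots\times J_N}$ with $1\le J_n\le I_n$ of the form $y_{j_1\cdots j_N}=x_{i_{1j_1}\cdots i_{Nj_N}}$ for some indices $1\leq i_{n1}<\cdots<i_{nJ_n}\leq I_n$, $1\le n\le N$. *)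

theory Defs
  imports Main "Jordan_Normal_Form.DL_Rank"
begin

text \<open>An order-N real tensor of size I_1 x ... x I_N is a function on multi-indices
  (lists of length N, 0-based entries i!k < dims!k); dims is the list [I_1,...,I_N].
  Values outside the index box are irrelevant.\<close>

definition multi_index :: "nat list \<Rightarrow> nat list \<Rightarrow> bool" where
  "multi_index dims i \<longleftrightarrow> length i = length dims \<and> (\<forall>k<length dims. i ! k < dims ! k)"

text \<open>Mode-n unfolding: an I_n x (prod_{k /= n} I_k) matrix; the column index c is decoded
  into the remaining indices in mixed radix (lower modes varying fastest, Kolda convention).\<close>

definition unfold_col_index :: "nat list \<Rightarrow> nat \<Rightarrow> nat \<Rightarrow> nat \<Rightarrow> nat" where
  "unfold_col_index dims n c k = (c div (\<Prod>l\<in>{..<k} - {n}. dims ! l)) mod (dims ! k)"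

definition mode_unfolding :: "nat list \<Rightarrow> (nat list \<Rightarrow> real) \<Rightarrow> nat \<Rightarrow> real mat" where
  "mode_unfolding dims X n =
     mat (dims ! n) (\<Prod>k\<in>{..<length dims} - {n}. dims ! k)
       (\<lambda>(r, c). X (map (\<lambda>k. if k = n then r else unfold_col_index dims n c k) [0..<length dims]))"

definition mat_rank :: "real mat \<Rightarrow> nat" where
  "mat_rank A = vec_space.rank (dim_row A) A"

end

theory Submission
  imports Defs
begin



context vec_space begin

lemma mult_in_col_span:
  assumes B: "B \<in> carrier_mat n b" and x: "x \<in> carrier_vec b"
  shows "B *\<^sub>v x \<in> span (set (cols B))"
  using col_space_eq[OF B] B x unfolding col_space_def by auto

lemma rank_mono_span:
  assumes A: "A \<in> carrier_mat n a" and B: "B \<in> carrier_mat n b"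
    and sub: "set (cols A) \<subseteq> span (set (cols B))"
  shows "rank A \<le> rank B"
proof -
  define W where "W = span (set (cols B))"
  have cB: "set (cols B) \<subseteq> carrier_vec n" using B cols_dim by blast
  have cA: "set (cols A) \<subseteq> carrier_vec n" using A cols_dim by blast
  have sW: "subspace class_ring W V" unfolding W_def using span_is_subspace[OF cB] .
  have sA: "subspace class_ring (span (set (cols A))) V" using span_is_subspace[OF cA] .
  have incl: "span (set (cols A)) \<subseteq> W" unfolding W_def using span_subsetI[OF cB sub] .
  have subspace: "subspace class_ring (span (set (cols A))) (vs W)"
    using nested_subspaces[OF sW sA incl] .
  have fW: "vectorspace.fin_dim class_ring (vs W)" unfolding W_def using fin_dim_span_cols[OF B] .
  have fA: "vectorspace.fin_dim class_ring (span_vs (set (cols A)))" using fin_dim_span_cols[OF A] .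
  show ?thesis unfolding rank_def
    using vectorspace.subspace_dim[OF subspace_is_vs[OF sW] subspace fW] fA unfolding W_def by auto
qed

end



lemma rank_mult_left_le:
  fixes Q A :: "'a::field mat"
  assumes Q: "Q \<in> carrier_mat m n" and A: "A \<in> carrier_mat n a"
  shows "vec_space.rank m (Q * A) \<le> vec_space.rank n A"
proof -
  interpret Vn: vec_space "TYPE('a)" n .
  interpret Vm: vec_space "TYPE('a)" m .
  define S where "S = Vn.span (set (cols A))"
  have cA: "set (cols A) \<subseteq> carrier_vec n" using A cols_dim by blast
  have sS: "subspace class_ring S Vn.V" unfolding S_def using Vn.span_is_subspace[OF cA] .
  have vsS: "vectorspace class_ring (Vn.vs S)" using Vn.subspace_is_vs[OF sS] .
  have Ssub: "S \<subseteq> carrier_vec n" using sS unfolding subspace_def submodule_def by auto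
  have lmh: "mod_hom class_ring (Vn.vs S) Vm.V ((*\<^sub>v) Q)"
  proof -
    show "mod_hom class_ring (Vn.vs S) Vm.V ((*\<^sub>v) Q)"
      unfolding mod_hom_def mod_hom_axioms_def
    proof (intro conjI)
      show "Module.module class_ring (Vn.vs S)" using vsS unfolding vectorspace_def by auto
      show "Module.module class_ring Vm.V" using Vm.vectorspace_axioms unfolding vectorspace_def by auto
      show "(*\<^sub>v) Q \<in> LinearCombinations.module_hom class_ring (Vn.vs S) Vm.V"
        unfolding LinearCombinations.module_hom_def using Ssub Q
        by (auto simp: mult_mat_vec intro!: mult_add_distrib_mat_vec[OF Q])
    qed
  qed
  have lm: "linear_map class_ring (Vn.vs S) Vm.V ((*\<^sub>v) Q)"
  proof -
    have "mod_hom class_ring (Vn.vs S) Vm.V ((*\<^sub>v) Q)"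
      unfolding mod_hom_def mod_hom_axioms_def
    proof (intro conjI)
      show "Module.module class_ring (Vn.vs S)" using vsS unfolding vectorspace_def by auto
      show "Module.module class_ring Vm.V" using Vm.vectorspace_axioms unfolding vectorspace_def by auto
      show "(*\<^sub>v) Q \<in> LinearCombinations.module_hom class_ring (Vn.vs S) Vm.V"
        unfolding LinearCombinations.module_hom_def using Ssub Q
        by (auto simp: mult_mat_vec intro!: mult_add_distrib_mat_vec[OF Q])
    qed
    then show ?thesis using vsS Vm.vectorspace_axioms unfolding linear_map_def by auto
  qed
  have fd: "vectorspace.fin_dim class_ring (Vn.vs S)" unfolding S_def using Vn.fin_dim_span_cols[OF A] .
  have rn: "vectorspace.dim class_ring (Vm.vs (mod_hom.im (Vn.vs S) ((*\<^sub>v) Q))) + vectorspace.dim class_ring (Vn.vs (mod_hom.ker (Vn.vs S) Vm.V ((*\<^sub>v) Q))) = vectorspace.dim class_ring (Vn.vs S)"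
    using linear_map.rank_nullity[OF lm fd] by simp
  have im: "mod_hom.im (Vn.vs S) ((*\<^sub>v) Q) = Vm.span (set (cols (Q * A)))"
  proof -
    have QA: "Q * A \<in> carrier_mat m a" using Q A by auto
    have "mod_hom.im (Vn.vs S) ((*\<^sub>v) Q) = (*\<^sub>v) Q ` S" using mod_hom.im_def[OF lmh] by simp
    also have "\<dots> = (*\<^sub>v) Q ` {y \<in> carrier_vec n. \<exists>x\<in>carrier_vec a. A *\<^sub>v x = y}"
      unfolding S_def using Vn.col_space_eq[OF A] A unfolding Vn.col_space_def by auto
    also have "(*\<^sub>v) Q ` {y \<in> carrier_vec n. \<exists>x\<in>carrier_vec a. A *\<^sub>v x = y} = {y \<in> carrier_vec m. \<exists>x\<in>carrier_vec a. (Q * A) *\<^sub>v x = y}"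
      using Q A apply (auto simp: image_def)
      subgoal for x by (rule exI[of _ "A *\<^sub>v x"]) auto
      done
    also have "\<dots> = Vm.span (set (cols (Q * A)))"
      using Vm.col_space_eq[OF QA] QA Q A unfolding Vm.col_space_def by (auto simp: carrier_matD)
    finally show ?thesis .
  qed
  show ?thesis unfolding Vm.rank_def Vn.rank_def using rn im S_def by simp
qed




lemma (in vec_space) rank_le_nr:
  assumes A: "A \<in> carrier_mat n a"
  shows "rank A \<le> n"
proof -
  have cA: "set (cols A) \<subseteq> carrier_vec n" using A cols_dim by blast
  show ?thesis unfolding rank_def
    using subspace_dim[OF span_is_subspace[OF cA] fin_dim fin_dim_span_cols[OF A]] dim_is_n by simp
qed

lemma gram_zero:
  fixes B :: "real mat"
  assumes B: "B \<in> carrier_mat r p" and y: "y \<in> carrier_vec r"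
    and z: "(B * B\<^sup>T) *\<^sub>v y = 0\<^sub>v r"
  shows "B\<^sup>T *\<^sub>v y = 0\<^sub>v p"
proof -
  define w where "w = B\<^sup>T *\<^sub>v y"
  have w: "w \<in> carrier_vec p" unfolding w_def using B by (intro carrier_vecI) simp
  have wj: "w $ j = (\<Sum>i<r. B $$ (i, j) * y $ i)" if "j < p" for j
    unfolding w_def using B y that by (auto simp: scalar_prod_def lessThan_atLeast0 mult.commute)
  have "(B * B\<^sup>T) *\<^sub>v y = B *\<^sub>v w" unfolding w_def using B y by auto
  then have Bw: "B *\<^sub>v w = 0\<^sub>v r" using z by simp
  have "0 = (\<Sum>i<r. y $ i * (B *\<^sub>v w) $ i)" using Bw by simp
  also have "\<dots> = (\<Sum>i<r. y $ i * (\<Sum>j<p. B $$ (i, j) * w $ j))"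
    using B w by (auto simp: scalar_prod_def lessThan_atLeast0 intro!: sum.cong)
  also have "\<dots> = (\<Sum>j<p. w $ j * (\<Sum>i<r. B $$ (i, j) * y $ i))"
  proof -
    have "(\<Sum>i<r. y $ i * (\<Sum>j<p. B $$ (i, j) * w $ j)) = (\<Sum>i<r. \<Sum>j<p. w $ j * (B $$ (i, j) * y $ i))"
      by (simp add: sum_distrib_left mult_ac)
    also have "\<dots> = (\<Sum>j<p. \<Sum>i<r. w $ j * (B $$ (i, j) * y $ i))" by (rule sum.swap)
    also have "\<dots> = (\<Sum>j<p. w $ j * (\<Sum>i<r. B $$ (i, j) * y $ i))" by (simp add: sum_distrib_left)
    finally show ?thesis .
  qed
  also have "\<dots> = (\<Sum>j<p. (w $ j)^2)" using wj by (simp add: power2_eq_square)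
  finally have "(\<Sum>j<p. (w $ j)^2) = 0" by simp
  then have "\<forall>j\<in>{..<p}. (w $ j)^2 = 0" by (subst (asm) sum_nonneg_eq_0_iff) auto
  then show ?thesis unfolding w_def[symmetric] using w by (intro eq_vecI) auto
qed

lemma rank_full_rows:
  fixes B :: "real mat"
  assumes B: "B \<in> carrier_mat r p"
    and indep: "\<And>y. y \<in> carrier_vec r \<Longrightarrow> B\<^sup>T *\<^sub>v y = 0\<^sub>v p \<Longrightarrow> y = 0\<^sub>v r"
  shows "vec_space.rank r B = r"
proof -
  interpret Vr: vec_space "TYPE(real)" r .
  define C where "C = B * B\<^sup>T"
  have C: "C \<in> carrier_mat r r" unfolding C_def using B by auto
  have "det C \<noteq> 0"
  proof
    assume "det C = 0"
    then obtain v where v: "v \<in> carrier_vec r" "v \<noteq> 0\<^sub>v r" "C *\<^sub>v v = 0\<^sub>v r"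
      using det_0_iff_vec_prod_zero_field[OF C] by auto
    then show False using indep[OF v(1) gram_zero[OF B v(1)]] C_def by auto
  qed
  then have rC: "Vr.rank C = r" using Vr.det_rank_iff[OF C] by simp
  have "set (cols C) \<subseteq> Vr.span (set (cols B))"
  proof
    fix x assume "x \<in> set (cols C)"
    then obtain j where j: "j < r" "x = col C j" using C by (auto simp: in_set_conv_nth)
    then have "x = B *\<^sub>v col B\<^sup>T j" unfolding C_def using B by auto
    then show "x \<in> Vr.span (set (cols B))" using Vr.mult_in_col_span[OF B] B j by auto
  qed
  then have "Vr.rank C \<le> Vr.rank B" using Vr.rank_mono_span[OF C B] by simp
  with rC Vr.rank_le_nr[OF B] show ?thesis by simp
qed




definition WW :: "nat list \<Rightarrow> nat \<Rightarrow> nat \<Rightarrow> nat" where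
  "WW D n k = (\<Prod>l\<in>{..<k} - {n}. D ! l)"

lemma WW_Suc: "WW D n (Suc k) = WW D n k * (if k = n then 1 else D ! k)"
proof (cases "k = n")
  case True
  then have "{..<Suc k} - {n} = {..<k} - {n}" by auto
  then show ?thesis using True by (simp add: WW_def)
next
  case False
  then have "{..<Suc k} - {n} = insert k ({..<k} - {n})" by auto
  then show ?thesis using False by (simp add: WW_def mult.commute)
qed

lemma WW_dvd: "k < M \<Longrightarrow> k \<noteq> n \<Longrightarrow> WW D n k * D ! k dvd WW D n M"
proof (induction M)
  case 0 then show ?case by simp
next
  case (Suc M)
  show ?case
  proof (cases "k = M")
    case True then show ?thesis using Suc.prems by (simp add: WW_Suc)
  next
    case False
    then have "WW D n k * D ! k dvd WW D n M" using Suc by simp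
    then show ?thesis by (simp add: WW_Suc)
  qed
qed

lemma WW_pos: "(\<And>k. k < M \<Longrightarrow> k \<noteq> n \<Longrightarrow> 0 < D ! k) \<Longrightarrow> 0 < WW D n M"
  by (induction M) (auto simp: WW_Suc WW_def)

lemma unfold_col_index_WW: "unfold_col_index D n c k = (c div WW D n k) mod D ! k"
  by (simp add: unfold_col_index_def WW_def)

lemma encode_exists:
  assumes "\<And>k. k < M \<Longrightarrow> k \<noteq> n \<Longrightarrow> x k < D ! k"
  shows "\<exists>c < WW D n M. \<forall>k<M. k \<noteq> n \<longrightarrow> (c div WW D n k) mod D ! k = x k"
  using assms
proof (induction M)
  case 0 then show ?case by (simp add: WW_def)
next
  case (Suc M)
  then obtain c where c: "c < WW D n M" "\<forall>k<M. k \<noteq> n \<longrightarrow> (c div WW D n k) mod D ! k = x k"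
    by auto
  show ?case
  proof (cases "M = n")
    case True
    then show ?thesis using c by (auto simp: WW_Suc less_Suc_eq)
  next
    case False
    have pos: "0 < WW D n M"
    proof (rule WW_pos)
      fix k assume "k < M" "k \<noteq> n"
      then have "x k < D ! k" using Suc.prems by simp
      then show "0 < D ! k" by simp
    qed
    have xM: "x M < D ! M" using Suc.prems False by simp
    define c' where "c' = c + x M * WW D n M"
    have lt: "c' < WW D n (Suc M)"
    proof -
      have "c' < WW D n M + x M * WW D n M" unfolding c'_def using c(1) by simp
      also have "\<dots> = (x M + 1) * WW D n M" by simp
      also have "\<dots> \<le> D ! M * WW D n M" using xM by (intro mult_right_mono) auto
      finally show ?thesis using False by (simp add: WW_Suc mult.commute)
    qed
    have dig: "(c' div WW D n k) mod D ! k = x k" if k: "k < Suc M" "k \<noteq> n" for k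
    proof (cases "k = M")
      case True
      have "c' div WW D n M = x M" unfolding c'_def using c(1) pos by simp
      then show ?thesis using True xM by simp
    next
      case False
      then have kM: "k < M" using k by simp
      have posk: "0 < WW D n k"
      proof (rule WW_pos)
        fix l assume "l < k" "l \<noteq> n"
        then have "x l < D ! l" using Suc.prems kM by simp
        then show "0 < D ! l" by simp
      qed
      obtain q where q: "WW D n M = WW D n k * D ! k * q" using WW_dvd[OF kM k(2), of D] by (auto elim: dvdE)
      have "c' = c + (x M * D ! k * q) * WW D n k" unfolding c'_def q by (simp add: mult_ac)
      then have "c' div WW D n k = c div WW D n k + x M * D ! k * q" using posk by simp
      then have "(c' div WW D n k) mod D ! k = (c div WW D n k) mod D ! k"
        by (simp add: mult.assoc mod_mult_self2[of _ "D ! k"] mult.commute[of _ "D ! k"])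
      then show ?thesis using c(2) kM k by simp
    qed
    show ?thesis using lt dig by blast
  qed
qed




definition idx :: "nat list \<Rightarrow> nat \<Rightarrow> nat \<Rightarrow> nat list" where
  "idx D n c = map (\<lambda>k. if k = n then 0 else unfold_col_index D n c k) [0..<length D]"

definition fib :: "nat list \<Rightarrow> (nat list \<Rightarrow> real) \<Rightarrow> nat \<Rightarrow> nat list \<Rightarrow> real vec" where
  "fib D Z n i = vec (D ! n) (\<lambda>r. Z (i[n := r]))"

lemma mode_unfolding_carrier:
  "mode_unfolding D Z n \<in> carrier_mat (D ! n) (WW D n (length D))"
  by (simp add: mode_unfolding_def WW_def)

lemma mode_unfolding_index:
  assumes "n < length D" "r < D ! n" "c < WW D n (length D)"
  shows "mode_unfolding D Z n $$ (r, c) = Z ((idx D n c)[n := r])"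
proof -
  have "map (\<lambda>k. if k = n then r else unfold_col_index D n c k) [0..<length D] = (idx D n c)[n := r]"
    unfolding idx_def using assms(1) by (intro nth_equalityI) auto
  then show ?thesis using assms by (simp add: mode_unfolding_def WW_def)
qed

lemma mode_unfolding_col:
  assumes "n < length D" "c < WW D n (length D)"
  shows "col (mode_unfolding D Z n) c = fib D Z n (idx D n c)"
  using assms mode_unfolding_carrier[of D Z n]
  by (intro eq_vecI) (auto simp: fib_def mode_unfolding_index)

lemma idx_multi_index:
  assumes pos: "\<forall>k<length D. 0 < D ! k" and n: "n < length D"
  shows "multi_index D (idx D n c)"
  using assms unfolding multi_index_def idx_def unfold_col_index_def by auto

lemma idx_surj:
  assumes mi: "multi_index D i" and n: "n < length D"
  shows "\<exists>c < WW D n (length D). \<forall>r. (idx D n c)[n := r] = i[n := r]"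
proof -
  have "\<And>k. k < length D \<Longrightarrow> k \<noteq> n \<Longrightarrow> i ! k < D ! k" using mi unfolding multi_index_def by auto
  from encode_exists[of "length D" n "\<lambda>k. i ! k" D, OF this]
  obtain c where c: "c < WW D n (length D)" "\<forall>k<length D. k \<noteq> n \<longrightarrow> (c div WW D n k) mod D ! k = i ! k"
    by blast
  have "(idx D n c)[n := r] = i[n := r]" for r
    using c(2) mi n unfolding idx_def multi_index_def unfold_col_index_WW
    by (intro nth_equalityI) (auto simp: nth_list_update)
  then show ?thesis using c(1) by blast
qed

lemma fib_in_cols:
  assumes mi: "multi_index D i" and n: "n < length D"
  shows "fib D Z n i \<in> set (cols (mode_unfolding D Z n))"
proof -
  obtain c where c: "c < WW D n (length D)" "\<forall>r. (idx D n c)[n := r] = i[n := r]"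
    using idx_surj[OF mi n] by blast
  have "fib D Z n i = col (mode_unfolding D Z n) c"
    using mode_unfolding_col[OF n c(1)] c(2) by (simp add: fib_def)
  then show ?thesis using c(1) mode_unfolding_carrier[of D Z n]
    by (auto simp: cols_def)
qed

lemma cols_are_fibs:
  assumes pos: "\<forall>k<length D. 0 < D ! k" and n: "n < length D"
    and x: "x \<in> set (cols (mode_unfolding D Z n))"
  shows "\<exists>i. multi_index D i \<and> x = fib D Z n i"
proof -
  obtain c where c: "c < WW D n (length D)" "x = col (mode_unfolding D Z n) c"
    using x mode_unfolding_carrier[of D Z n] by (auto simp: cols_def)
  then show ?thesis using mode_unfolding_col[OF n c(1)] idx_multi_index[OF pos n] by auto
qed

lemma mode_unfolding_cong:
  assumes "\<And>j. length j = length D \<Longrightarrow> Z j = Z' j"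
  shows "mode_unfolding D Z n = mode_unfolding D Z' n"
  unfolding mode_unfolding_def using assms by (intro eq_matI) auto




lemma select_rows:
  fixes a :: "nat \<Rightarrow> nat \<Rightarrow> real"
  shows "\<exists>S. S \<subseteq> {..<I} \<and> (\<forall>i<I. \<exists>co. \<forall>c<P. a i c = (\<Sum>s\<in>S. co s * a s c)) \<and>
             (\<forall>y. (\<forall>c<P. (\<Sum>s\<in>S. y s * a s c) = 0) \<longrightarrow> (\<forall>s\<in>S. y s = 0))"
proof -
  define Sp where "Sp S \<longleftrightarrow> S \<subseteq> {..<I} \<and> (\<forall>i<I. \<exists>co. \<forall>c<P. a i c = (\<Sum>s\<in>S. co s * a s c))" for S
  have "Sp {..<I}"
    unfolding Sp_def
  proof (intro conjI allI impI)
    fix i assume i: "i < I"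
    show "\<exists>co. \<forall>c<P. a i c = (\<Sum>s\<in>{..<I}. co s * a s c)"
    proof (rule exI[of _ "\<lambda>s. if s = i then 1 else 0"], intro allI impI)
      fix c
      have "(\<Sum>s\<in>{..<I}. (if s = i then 1 else 0) * a s c) = (\<Sum>s\<in>{..<I}. if s = i then a s c else 0)"
        by (rule sum.cong) auto
      also have "\<dots> = a i c" using i by (simp add: sum.delta)
      finally show "a i c = (\<Sum>s\<in>{..<I}. (if s = i then 1 else 0) * a s c)" by simp
    qed
  qed simp
  from ex_has_least_nat[of Sp "{..<I}" card, OF this]
  obtain S where S: "Sp S" and min: "\<And>T. Sp T \<Longrightarrow> card S \<le> card T" by blast
  have fin: "finite S" using S unfolding Sp_def using finite_subset by blast
  have indep: "\<forall>s\<in>S. y s = 0" if yz: "\<forall>c<P. (\<Sum>s\<in>S. y s * a s c) = 0" for y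
  proof (rule ccontr)
    assume "\<not> (\<forall>s\<in>S. y s = 0)"
    then obtain s0 where s0: "s0 \<in> S" "y s0 \<noteq> 0" by blast
    define S' where "S' = S - {s0}"
    have split: "(\<Sum>s\<in>S. f s) = f s0 + (\<Sum>s\<in>S'. f s)" for f :: "nat \<Rightarrow> real"
      unfolding S'_def using fin s0(1) by (simp add: sum.remove)
    have "Sp S'"
      unfolding Sp_def
    proof (intro conjI allI impI)
      show "S' \<subseteq> {..<I}" using S unfolding Sp_def S'_def by auto
      fix i assume i: "i < I"
      obtain co where co: "\<forall>c<P. a i c = (\<Sum>s\<in>S. co s * a s c)" using S i unfolding Sp_def by blast
      show "\<exists>co'. \<forall>c<P. a i c = (\<Sum>s\<in>S'. co' s * a s c)"
      proof (rule exI[of _ "\<lambda>s. co s - co s0 * y s / y s0"], intro allI impI)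
        fix c assume c: "c < P"
        have ys: "(\<Sum>s\<in>S'. y s * a s c) = - (y s0 * a s0 c)" using yz c split[of "\<lambda>s. y s * a s c"] by simp
        have "(\<Sum>s\<in>S'. (co s - co s0 * y s / y s0) * a s c)
              = (\<Sum>s\<in>S'. co s * a s c) - (co s0 / y s0) * (\<Sum>s\<in>S'. y s * a s c)"
          by (simp add: algebra_simps sum_subtractf sum_distrib_left)
        also have "\<dots> = (\<Sum>s\<in>S'. co s * a s c) + co s0 * a s0 c"
          using ys s0(2) by simp
        also have "\<dots> = a i c" using co c split[of "\<lambda>s. co s * a s c"] by simp
        finally show "a i c = (\<Sum>s\<in>S'. (co s - co s0 * y s / y s0) * a s c)" by simp
      qed
    qed
    moreover have "card S' < card S" unfolding S'_def using fin s0(1) by (meson card_Diff1_less)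
    ultimately show False using min by fastforce
  qed
  show ?thesis using S indep unfolding Sp_def by blast
qed




definition enum :: "nat set \<Rightarrow> nat \<Rightarrow> nat" where
  "enum S t = sorted_list_of_set S ! t"

lemma enum_facts:
  assumes fin: "finite S"
  shows "enum S ` {..<card S} = S" "inj_on (enum S) {..<card S}"
    "strict_mono_on {..<card S} (enum S)"
proof -
  let ?L = "sorted_list_of_set S"
  have len: "length ?L = card S" using fin by (simp add: length_sorted_list_of_set)
  have set: "set ?L = S" using fin by (simp add: set_sorted_list_of_set)
  have dist: "distinct ?L" using fin by (simp add: distinct_sorted_list_of_set)
  have ss: "sorted_wrt (<) ?L" using fin by (simp add: strict_sorted_list_of_set)
  show "enum S ` {..<card S} = S"
  proof -
    have "(!) ?L ` {..<length ?L} = set ?L" by (auto simp: set_conv_nth)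
    then show ?thesis unfolding enum_def using len set by simp
  qed
  show "inj_on (enum S) {..<card S}"
    unfolding enum_def inj_on_def using len dist by (auto simp: nth_eq_iff_index_eq)
  show "strict_mono_on {..<card S} (enum S)"
    unfolding enum_def strict_mono_on_def using len ss by (auto intro: sorted_wrt_nth_less)
qed

lemma sum_enum:
  assumes fin: "finite S"
  shows "(\<Sum>t<card S. f (enum S t)) = (\<Sum>s\<in>S. f s)"
proof -
  have "(\<Sum>s\<in>S. f s) = (\<Sum>s\<in>enum S ` {..<card S}. f s)" using enum_facts(1)[OF fin] by simp
  also have "\<dots> = (\<Sum>t<card S. f (enum S t))" using sum.reindex[OF enum_facts(2)[OF fin]] by simp
  finally show ?thesis by simp
qed

lemma restrict_mode:
  fixes D :: "nat list" and Z :: "nat list \<Rightarrow> real"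
  assumes pos: "\<forall>k<length D. 0 < D ! k" and m: "m < length D"
    and nz: "\<exists>i. multi_index D i \<and> Z i \<noteq> 0"
  obtains S where "S \<subseteq> {..<D ! m}" "card S = mat_rank (mode_unfolding D Z m)"
    "\<forall>k<length D. 0 < D[m := card S] ! k"
    "\<exists>i. multi_index (D[m := card S]) i \<and> Z (i[m := enum S (i ! m)]) \<noteq> 0"
    "\<forall>k<length D. mat_rank (mode_unfolding (D[m := card S]) (\<lambda>j. Z (j[m := enum S (j ! m)])) k)
        = mat_rank (mode_unfolding D Z k)"
proof -
  define N where "N = length D"
  define A where "A = mode_unfolding D Z m"
  define I where "I = D ! m"
  define P where "P = WW D m N"
  have A: "A \<in> carrier_mat I P" unfolding A_def I_def P_def N_def by (rule mode_unfolding_carrier)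
  obtain S where S: "S \<subseteq> {..<I}"
    and spans: "\<forall>i<I. \<exists>co. \<forall>c<P. A $$ (i, c) = (\<Sum>s\<in>S. co s * A $$ (s, c))"
    and indep: "\<forall>y. (\<forall>c<P. (\<Sum>s\<in>S. y s * A $$ (s, c)) = 0) \<longrightarrow> (\<forall>s\<in>S. y s = 0)"
    using select_rows[of I P "\<lambda>i c. A $$ (i, c)"] by blast
  have finS: "finite S" using S finite_subset by blast
  define K where "K = card S"
  define \<sigma> where "\<sigma> = enum S"
  have \<sigma>img: "\<sigma> ` {..<K} = S" and \<sigma>inj: "inj_on \<sigma> {..<K}"
    using enum_facts[OF finS] unfolding K_def \<sigma>_def by auto
  have \<sigma>S: "t < K \<Longrightarrow> \<sigma> t \<in> S" for t using \<sigma>img by auto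
  have \<sigma>I: "t < K \<Longrightarrow> \<sigma> t < I" for t using \<sigma>S S by auto
  have sumS: "(\<Sum>t<K. f (\<sigma> t)) = (\<Sum>s\<in>S. f s)" for f :: "nat \<Rightarrow> real"
    unfolding K_def \<sigma>_def by (rule sum_enum[OF finS])
  have "\<forall>i. \<exists>co. i < I \<longrightarrow> (\<forall>c<P. A $$ (i, c) = (\<Sum>s\<in>S. co s * A $$ (s, c)))" using spans by blast
  then obtain co where co: "\<And>i c. i < I \<Longrightarrow> c < P \<Longrightarrow> A $$ (i, c) = (\<Sum>s\<in>S. co i s * A $$ (s, c))"
    by metis
  have Zrel: "Z i = (\<Sum>s\<in>S. co (i ! m) s * Z (i[m := s]))" if mi: "multi_index D i" for i
  proof -
    obtain c where c: "c < P" "\<And>r. (idx D m c)[m := r] = i[m := r]"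
      using idx_surj[OF mi m] unfolding P_def N_def by blast
    have im: "i ! m < I" using mi m unfolding multi_index_def I_def by auto
    have ent: "A $$ (r, c) = Z (i[m := r])" if "r < I" for r
      unfolding A_def using mode_unfolding_index[OF m, of r c Z] that c unfolding I_def P_def N_def by simp
    have "Z i = A $$ (i ! m, c)" using ent[OF im] by simp
    also have "\<dots> = (\<Sum>s\<in>S. co (i ! m) s * A $$ (s, c))" using co[OF im c(1)] .
    also have "\<dots> = (\<Sum>s\<in>S. co (i ! m) s * Z (i[m := s]))"
      using S ent by (intro sum.cong) auto
    finally show ?thesis .
  qed
  obtain i0 where i0: "multi_index D i0" "Z i0 \<noteq> 0" using nz by blast
  have "(\<Sum>s\<in>S. co (i0 ! m) s * Z (i0[m := s])) \<noteq> 0" using Zrel[OF i0(1)] i0(2) by simp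
  then obtain s0 where s0: "s0 \<in> S" "Z (i0[m := s0]) \<noteq> 0"
    by (metis (no_types, lifting) mult_zero_right sum.neutral)
  then have Kpos: "0 < K" unfolding K_def using finS by (auto simp: card_gt_0_iff)
  define D' where "D' = D[m := K]"
  define Z' where "Z' = (\<lambda>j. Z (j[m := \<sigma> (j ! m)]))"
  have lenD': "length D' = N" unfolding D'_def N_def by simp
  have D'k: "k \<noteq> m \<Longrightarrow> D' ! k = D ! k" for k unfolding D'_def by simp
  have D'm: "D' ! m = K" unfolding D'_def using m by simp
  have pos': "\<forall>k<length D'. 0 < D' ! k"
    using pos Kpos D'k D'm lenD' unfolding N_def by (metis)
  have WW': "WW D' m k = WW D m k" for k
    unfolding WW_def using D'k by (intro prod.cong) auto
  have idx': "idx D' m c = idx D m c" for c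
    unfolding idx_def unfold_col_index_WW WW' lenD' N_def using D'k by (intro nth_equalityI) auto
  obtain t0 where t0: "t0 < K" "\<sigma> t0 = s0" using s0(1) \<sigma>img by auto
  have nz': "\<exists>i. multi_index D' i \<and> Z' i \<noteq> 0"
  proof (intro exI conjI)
    have li: "length i0 = N" "m < length i0" using i0(1) m unfolding multi_index_def N_def by auto
    show "multi_index D' (i0[m := t0])"
      using i0(1) t0(1) lenD' D'k D'm li unfolding multi_index_def N_def by (auto simp: nth_list_update)
    show "Z' (i0[m := t0]) \<noteq> 0" unfolding Z'_def using li t0 s0(2) by simp
  qed
  define B where "B = mode_unfolding D' Z' m"
  have B: "B \<in> carrier_mat K P"
    unfolding B_def P_def using mode_unfolding_carrier[of D' Z' m] D'm WW' lenD' by simp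
  have Bent: "B $$ (t, c) = A $$ (\<sigma> t, c)" if "t < K" "c < P" for t c
  proof -
    have "B $$ (t, c) = Z' ((idx D m c)[m := t])"
      unfolding B_def using mode_unfolding_index[of m D' t c Z'] that m lenD' D'm WW' idx'
      unfolding N_def P_def by simp
    also have "\<dots> = Z ((idx D m c)[m := \<sigma> t])"
      unfolding Z'_def using m by (simp add: idx_def)
    also have "\<dots> = A $$ (\<sigma> t, c)"
      unfolding A_def using mode_unfolding_index[OF m, of "\<sigma> t" c Z] \<sigma>I[OF that(1)] that(2)
      unfolding I_def P_def N_def by simp
    finally show ?thesis .
  qed
  define Sel where "Sel = mat K I (\<lambda>(t, i). if i = \<sigma> t then 1 else (0::real))"
  have Sel: "Sel \<in> carrier_mat K I" unfolding Sel_def by simp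
  have SelA: "Sel * A = B"
  proof (rule eq_matI)
    fix t c assume tc: "t < dim_row B" "c < dim_col B"
    then have t: "t < K" and c: "c < P" using B by auto
    have "(Sel * A) $$ (t, c) = (\<Sum>i<I. (if i = \<sigma> t then 1 else 0) * A $$ (i, c))"
      using Sel A t c by (simp add: scalar_prod_def Sel_def lessThan_atLeast0)
    also have "\<dots> = (\<Sum>i<I. if i = \<sigma> t then A $$ (i, c) else 0)" by (rule sum.cong) auto
    also have "\<dots> = A $$ (\<sigma> t, c)" using \<sigma>I[OF t] by (simp add: sum.delta)
    finally show "(Sel * A) $$ (t, c) = B $$ (t, c)" using Bent t c by simp
  qed (use Sel A B in auto)
  define Q where "Q = mat I K (\<lambda>(i, t). co i (\<sigma> t))"
  have Q: "Q \<in> carrier_mat I K" unfolding Q_def by simp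
  have QB: "Q * B = A"
  proof (rule eq_matI)
    fix i c assume ic: "i < dim_row A" "c < dim_col A"
    then have i: "i < I" and c: "c < P" using A by auto
    have "(Q * B) $$ (i, c) = (\<Sum>t<K. co i (\<sigma> t) * B $$ (t, c))"
      using Q B i c by (simp add: scalar_prod_def Q_def lessThan_atLeast0)
    also have "\<dots> = (\<Sum>t<K. co i (\<sigma> t) * A $$ (\<sigma> t, c))" using Bent c by (intro sum.cong) auto
    also have "\<dots> = (\<Sum>s\<in>S. co i s * A $$ (s, c))" by (rule sumS)
    also have "\<dots> = A $$ (i, c)" using co[OF i c] by simp
    finally show "(Q * B) $$ (i, c) = A $$ (i, c)" .
  qed (use Q A B in auto)
  have rB: "vec_space.rank K B = K"
  proof (rule rank_full_rows[OF B])
    fix y assume y: "y \<in> carrier_vec K" and z: "B\<^sup>T *\<^sub>v y = 0\<^sub>v P"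
    define ys where "ys s = y $ (inv_into {..<K} \<sigma> s)" for s
    have ysig: "t < K \<Longrightarrow> ys (\<sigma> t) = y $ t" for t unfolding ys_def using \<sigma>inj by simp
    have "\<forall>c<P. (\<Sum>s\<in>S. ys s * A $$ (s, c)) = 0"
    proof (intro allI impI)
      fix c assume c: "c < P"
      have "(\<Sum>s\<in>S. ys s * A $$ (s, c)) = (\<Sum>t<K. ys (\<sigma> t) * A $$ (\<sigma> t, c))" by (rule sumS[symmetric])
      also have "\<dots> = (\<Sum>t<K. B $$ (t, c) * y $ t)" using ysig Bent c by (intro sum.cong) auto
      also have "\<dots> = (B\<^sup>T *\<^sub>v y) $ c" using B y c by (simp add: scalar_prod_def lessThan_atLeast0)
      also have "\<dots> = 0" using z c by simp
      finally show "(\<Sum>s\<in>S. ys s * A $$ (s, c)) = 0" .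
    qed
    then have "\<forall>s\<in>S. ys s = 0" using indep by blast
    then show "y = 0\<^sub>v K" using y ysig \<sigma>S by (intro eq_vecI) auto
  qed
  have r1: "vec_space.rank K B \<le> vec_space.rank I A"
    using rank_mult_left_le[OF Sel A] SelA by simp
  have r2: "vec_space.rank I A \<le> vec_space.rank K B"
    using rank_mult_left_le[OF Q B] QB by simp
  have rankm: "mat_rank A = K" "mat_rank B = K"
    using r1 r2 rB A B unfolding mat_rank_def by auto
  have rankk: "mat_rank (mode_unfolding D' Z' k) = mat_rank (mode_unfolding D Z k)"
    if k: "k < N" and km: "k \<noteq> m" for k
  proof -
    define Xk where "Xk = mode_unfolding D Z k"
    define Yk where "Yk = mode_unfolding D' Z' k"
    have kD: "k < length D" using k unfolding N_def .
    have kD': "k < length D'" using k lenD' by simp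
    have Xk: "Xk \<in> carrier_mat (D ! k) (WW D k N)" unfolding Xk_def N_def by (rule mode_unfolding_carrier)
    have Yk: "Yk \<in> carrier_mat (D ! k) (WW D' k N)"
      unfolding Yk_def using mode_unfolding_carrier[of D' Z' k] D'k[OF km] lenD' by simp
    interpret Vk: vec_space "TYPE(real)" "D ! k" .
    have cX: "set (cols Xk) \<subseteq> carrier_vec (D ! k)" using Xk cols_dim carrier_matD(1) by metis
    have cY: "set (cols Yk) \<subseteq> carrier_vec (D ! k)" using Yk cols_dim carrier_matD(1) by metis
    have sub1: "set (cols Yk) \<subseteq> Vk.span (set (cols Xk))"
    proof
      fix x assume "x \<in> set (cols Yk)"
      then obtain j where j: "multi_index D' j" "x = fib D' Z' k j"
        using cols_are_fibs[OF pos' kD'] unfolding Yk_def by blast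
      have lj: "length j = N" "m < length j" using j(1) m lenD' unfolding multi_index_def N_def by auto
      have jm: "j ! m < K" using j(1) lj D'm unfolding multi_index_def lenD' by auto
      have mi: "multi_index D (j[m := \<sigma> (j ! m)])"
        using j(1) lj \<sigma>I[OF jm] D'k lenD' unfolding multi_index_def I_def N_def
        by (auto simp: nth_list_update)
      have "x = fib D Z k (j[m := \<sigma> (j ! m)])"
        unfolding j(2) fib_def Z'_def using D'k[OF km] km
        by (intro eq_vecI) (auto simp: list_update_swap)
      then have "x \<in> set (cols Xk)" using fib_in_cols[OF mi kD] unfolding Xk_def by simp
      then show "x \<in> Vk.span (set (cols Xk))" using Vk.in_own_span cX by blast
    qed
    have sub2: "set (cols Xk) \<subseteq> Vk.span (set (cols Yk))"
    proof
      fix x assume "x \<in> set (cols Xk)"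
      then obtain i where i: "multi_index D i" "x = fib D Z k i"
        using cols_are_fibs[OF pos kD] unfolding Xk_def by blast
      have li: "length i = N" "m < length i" "k < length i" using i(1) m kD unfolding multi_index_def N_def by auto
      define G where "G = mat (D ! k) K (\<lambda>(r, t). Z ((i[k := r])[m := \<sigma> t]))"
      define v where "v = vec K (\<lambda>t. co (i ! m) (\<sigma> t))"
      have G: "G \<in> carrier_mat (D ! k) K" unfolding G_def by simp
      have v: "v \<in> carrier_vec K" unfolding v_def by simp
      have Gv: "G *\<^sub>v v = x"
      proof (rule eq_vecI)
        show "dim_vec (G *\<^sub>v v) = dim_vec x" using G i(2) by (simp add: fib_def)
        fix r assume "r < dim_vec x"
        then have r: "r < D ! k" using i(2) by (simp add: fib_def)
        have mir: "multi_index D (i[k := r])" using i(1) r kD unfolding multi_index_def by (auto simp: nth_list_update)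
        have "(G *\<^sub>v v) $ r = (\<Sum>t<K. Z ((i[k := r])[m := \<sigma> t]) * co (i ! m) (\<sigma> t))"
          using G v r by (simp add: scalar_prod_def G_def v_def lessThan_atLeast0)
        also have "\<dots> = (\<Sum>s\<in>S. co (i ! m) s * Z ((i[k := r])[m := s]))"
          using sumS[of "\<lambda>s. co (i ! m) s * Z ((i[k := r])[m := s])"] by (simp add: mult.commute)
        also have "\<dots> = Z (i[k := r])" using Zrel[OF mir] km by simp
        also have "\<dots> = x $ r" using i(2) r by (simp add: fib_def)
        finally show "(G *\<^sub>v v) $ r = x $ r" .
      qed
      have colsG: "set (cols G) \<subseteq> set (cols Yk)"
      proof
        fix y assume "y \<in> set (cols G)"
        then obtain t where t: "t < K" "y = col G t" using G by (auto simp: cols_def)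
        have mit: "multi_index D' (i[m := t])"
          using i(1) t(1) li D'k D'm lenD' unfolding multi_index_def N_def by (auto simp: nth_list_update)
        have "y = fib D' Z' k (i[m := t])"
          unfolding t(2) fib_def Z'_def G_def using D'k[OF km] km t(1) li
          by (intro eq_vecI) (auto simp: list_update_swap)
        then show "y \<in> set (cols Yk)" using fib_in_cols[OF mit kD'] unfolding Yk_def by simp
      qed
      have "x \<in> Vk.span (set (cols G))" using Vk.mult_in_col_span[OF G v] Gv by simp
      then show "x \<in> Vk.span (set (cols Yk))" using Vk.span_is_monotone[OF colsG] by blast
    qed
    have "Vk.rank Yk \<le> Vk.rank Xk" using Vk.rank_mono_span[OF Yk Xk sub1] .
    moreover have "Vk.rank Xk \<le> Vk.rank Yk" using Vk.rank_mono_span[OF Xk Yk sub2] .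
    ultimately show ?thesis using Xk Yk unfolding mat_rank_def Xk_def[symmetric] Yk_def[symmetric] by simp
  qed
  have allk: "\<forall>k<length D. mat_rank (mode_unfolding D' Z' k) = mat_rank (mode_unfolding D Z k)"
  proof (intro allI impI)
    fix k assume k: "k < length D"
    show "mat_rank (mode_unfolding D' Z' k) = mat_rank (mode_unfolding D Z k)"
    proof (cases "k = m")
      case True then show ?thesis using rankm unfolding A_def B_def by simp
    next
      case False then show ?thesis using rankk k unfolding N_def by simp
    qed
  qed
  show ?thesis
  proof (rule that)
    show "S \<subseteq> {..<D ! m}" using S unfolding I_def .
    show "card S = mat_rank (mode_unfolding D Z m)" using rankm unfolding A_def K_def by simp
    show "\<forall>k<length D. 0 < D[m := card S] ! k" using pos' lenD' unfolding D'_def K_def N_def by simp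
    show "\<exists>i. multi_index (D[m := card S]) i \<and> Z (i[m := enum S (i ! m)]) \<noteq> 0"
      using nz' unfolding D'_def K_def Z'_def \<sigma>_def .
    show "\<forall>k<length D. mat_rank (mode_unfolding (D[m := card S]) (\<lambda>j. Z (j[m := enum S (j ! m)])) k)
        = mat_rank (mode_unfolding D Z k)"
      using allk unfolding D'_def K_def Z'_def \<sigma>_def .
  qed
qed



theorem proposition3p5:
  fixes dims :: "nat list" and X :: "nat list \<Rightarrow> real"
  assumes nonzero: "\<exists>i. multi_index dims i \<and> X i \<noteq> 0"
  shows "\<exists>s :: nat \<Rightarrow> nat \<Rightarrow> nat.
     (\<forall>n<length dims.
        strict_mono_on {..<mat_rank (mode_unfolding dims X n)} (s n) \<and>
        (\<forall>j<mat_rank (mode_unfolding dims X n). s n j < dims ! n)) \<and>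
     (let R = map (\<lambda>n. mat_rank (mode_unfolding dims X n)) [0..<length dims];
          Y = (\<lambda>j. X (map (\<lambda>k. s k (j ! k)) [0..<length dims]))
      in \<forall>n<length dims. mat_rank (mode_unfolding R Y n) = R ! n)"
proof -
  define N where "N = length dims"
  define R where "R k = mat_rank (mode_unfolding dims X k)" for k
  define DD where "DD m = map (\<lambda>k. if k < m then R k else dims ! k) [0..<N]" for m
  define ZZ where "ZZ s m = (\<lambda>j. X (map (\<lambda>k. if k < m then s k (j ! k) else j ! k) [0..<N]))"
    for s :: "nat \<Rightarrow> nat \<Rightarrow> nat" and m
  define Inv where "Inv s m \<longleftrightarrow> (\<forall>k<m. strict_mono_on {..<R k} (s k) \<and> (\<forall>j<R k. s k j < dims ! k)) \<and>
     (\<forall>k<N. 0 < DD m ! k) \<and> (\<exists>i. multi_index (DD m) i \<and> ZZ s m i \<noteq> 0) \<and>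
     (\<forall>k<N. mat_rank (mode_unfolding (DD m) (ZZ s m) k) = R k)" for s m
  have lenDD: "length (DD m) = N" for m unfolding DD_def by simp
  have ind: "m \<le> N \<Longrightarrow> \<exists>s. Inv s m" for m
  proof (induction m)
    case 0
    have D0: "DD 0 = dims" unfolding DD_def N_def by (intro nth_equalityI) auto
    have Z0: "ZZ s 0 j = X j" if "length j = N" for s j
    proof -
      have "map (\<lambda>k. if k < 0 then s k (j ! k) else j ! k) [0..<N] = j"
        using that by (intro nth_equalityI) auto
      then show ?thesis unfolding ZZ_def by simp
    qed
    obtain i where i: "multi_index dims i" "X i \<noteq> 0" using nonzero by blast
    have "Inv (\<lambda>_ _. 0) 0" unfolding Inv_def
    proof (intro conjI)
      show "\<forall>k<N. 0 < DD 0 ! k" using i(1) unfolding D0 multi_index_def N_def by fastforce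
      show "\<exists>i. multi_index (DD 0) i \<and> ZZ (\<lambda>_ _. 0) 0 i \<noteq> 0"
        using i Z0 unfolding D0 multi_index_def N_def by metis
      show "\<forall>k<N. mat_rank (mode_unfolding (DD 0) (ZZ (\<lambda>_ _. 0) 0) k) = R k"
        unfolding D0 R_def using mode_unfolding_cong[of dims "ZZ (\<lambda>_ _. 0) 0" X] Z0 unfolding N_def by metis
    qed simp
    then show ?case by blast
  next
    case (Suc m)
    then obtain s where s: "Inv s m" by auto
    have m: "m < N" using Suc.prems by simp
    have pos: "\<forall>k<length (DD m). 0 < DD m ! k" and nz: "\<exists>i. multi_index (DD m) i \<and> ZZ s m i \<noteq> 0"
      and rk: "\<forall>k<N. mat_rank (mode_unfolding (DD m) (ZZ s m) k) = R k"
      and sm: "\<forall>k<m. strict_mono_on {..<R k} (s k) \<and> (\<forall>j<R k. s k j < dims ! k)"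
      using s lenDD unfolding Inv_def by auto
    have mD: "m < length (DD m)" using m lenDD by simp
    obtain S where S: "S \<subseteq> {..<DD m ! m}" "card S = mat_rank (mode_unfolding (DD m) (ZZ s m) m)"
      "\<forall>k<length (DD m). 0 < (DD m)[m := card S] ! k"
      "\<exists>i. multi_index ((DD m)[m := card S]) i \<and> ZZ s m (i[m := enum S (i ! m)]) \<noteq> 0"
      "\<forall>k<length (DD m). mat_rank (mode_unfolding ((DD m)[m := card S]) (\<lambda>j. ZZ s m (j[m := enum S (j ! m)])) k)
        = mat_rank (mode_unfolding (DD m) (ZZ s m) k)"
      using restrict_mode[OF pos mD nz] by blast
    have cS: "card S = R m" using S(2) rk m by simp
    have finS: "finite S" using S(1) finite_subset by blast
    have DDm: "DD m ! m = dims ! m" unfolding DD_def using m by simp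
    define s' where "s' = s(m := enum S)"
    have DSuc: "(DD m)[m := card S] = DD (Suc m)"
      unfolding DD_def cS using m by (intro nth_equalityI) (auto simp: nth_list_update)
    have ZSuc: "ZZ s m (j[m := enum S (j ! m)]) = ZZ s' (Suc m) j" if "length j = N" for j
    proof -
      have eq: "map (\<lambda>k. if k < m then s k (j[m := enum S (j ! m)] ! k) else j[m := enum S (j ! m)] ! k) [0..<N]
          = map (\<lambda>k. if k < Suc m then s' k (j ! k) else j ! k) [0..<N]"
        using that m by (intro nth_equalityI) (auto simp: s'_def nth_list_update)
      show ?thesis unfolding ZZ_def eq by (rule refl)
    qed
    have "Inv s' (Suc m)" unfolding Inv_def
    proof (intro conjI)
      show "\<forall>k<Suc m. strict_mono_on {..<R k} (s' k) \<and> (\<forall>j<R k. s' k j < dims ! k)"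
      proof (intro allI impI)
        fix k assume k: "k < Suc m"
        show "strict_mono_on {..<R k} (s' k) \<and> (\<forall>j<R k. s' k j < dims ! k)"
        proof (cases "k = m")
          case True
          have "strict_mono_on {..<R k} (s' k)" using enum_facts(3)[OF finS] True cS by (simp add: s'_def)
          moreover have "\<forall>j<R k. s' k j < dims ! k"
            using enum_facts(1)[OF finS] True cS S(1) DDm by (force simp: s'_def)
          ultimately show ?thesis by simp
        next
          case False then show ?thesis using sm k by (simp add: s'_def)
        qed
      qed
      show "\<forall>k<N. 0 < DD (Suc m) ! k" using S(3) DSuc lenDD by metis
      show "\<exists>i. multi_index (DD (Suc m)) i \<and> ZZ s' (Suc m) i \<noteq> 0"
        using S(4) DSuc ZSuc lenDD unfolding multi_index_def by metis
      show "\<forall>k<N. mat_rank (mode_unfolding (DD (Suc m)) (ZZ s' (Suc m)) k) = R k"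
      proof (intro allI impI)
        fix k assume k: "k < N"
        have "mode_unfolding (DD (Suc m)) (ZZ s' (Suc m)) k
            = mode_unfolding (DD (Suc m)) (\<lambda>j. ZZ s m (j[m := enum S (j ! m)])) k"
          using ZSuc lenDD by (intro mode_unfolding_cong) simp
        then show "mat_rank (mode_unfolding (DD (Suc m)) (ZZ s' (Suc m)) k) = R k"
          using S(5) DSuc rk k lenDD by metis
      qed
    qed
    then show ?case by blast
  qed
  obtain s where s: "Inv s N" using ind by blast
  have DN: "DD N = map R [0..<N]" unfolding DD_def by simp
  have ZN: "ZZ s N = (\<lambda>j. X (map (\<lambda>k. s k (j ! k)) [0..<N]))" unfolding ZZ_def by (intro ext arg_cong[where f=X] map_cong) auto
  show ?thesis
  proof (rule exI[of _ s], intro conjI)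
    show "\<forall>n<length dims. strict_mono_on {..<mat_rank (mode_unfolding dims X n)} (s n) \<and>
        (\<forall>j<mat_rank (mode_unfolding dims X n). s n j < dims ! n)"
      using s unfolding Inv_def R_def N_def by simp
    show "let R = map (\<lambda>n. mat_rank (mode_unfolding dims X n)) [0..<length dims];
          Y = (\<lambda>j. X (map (\<lambda>k. s k (j ! k)) [0..<length dims]))
      in \<forall>n<length dims. mat_rank (mode_unfolding R Y n) = R ! n"
      using s DN ZN unfolding Inv_def Let_def R_def N_def by simp
  qed
qed


end
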